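(* Let $\mathcal{M}$ be a CTMC with state space $S$, nonnegative reward function $\rho\colon S\to\mathbb{R}_{\geq0}$, and a unique absorbing goal state $g$ with $\rho(g)>0$. Let $s\in S$ with $\rho(s)=0$ and $P(s,s)\in(0,1)$. Let $\mathcal{M}^*$ be as $\mathcal{M}$ except that $P^{\mathcal{M}^*}(s,s)=0$ and $P^{\mathcal{M}^*}(s,s')=\frac{P^{\mathcal{M}}(s,s')}{1-P^{\mathcal{M}}(s,s)}$ for all $s'\neq s$. Then $\mathrm{Pr}^{\mathcal{M}}_s(\lozenge_{\leq r}g)=\mathrm{Pr}^{\mathcal{M}^*}_s(\lozenge_{\leq r}g)$ for all $r\geq0$.
   Context: A CTMC has finite state set $S$, transition probabilities $P\colon S\to\mathrm{Distr}(S)$, exit rates $E\colon S\to\mathbb{R}_{>0}$, an initial state and a labeling. A timed path is $\sigma=s_0t_0s_1t_1\dots$ with $t_i>0$ the residence time in $s_i$ (exponential with rate $E(s_i)$; then a jump to $s_{i+1}$ with probability $P(s_i,s_{i+1})$). $\sigma@t=s_m$ for $m$ the smallest index with $t\leq\sum_{i=0}^mt_i$. Cumulative reward until $t$: $\rho(\sigma,t)=\sum_{j=0}^{m-1}t_j\rho(s_j)+(t-\sum_{j=0}^{m-1}t_j)\rho(s_m)$ where $\sigma@t=s_m$. $\mathrm{Pr}^{\mathcal{M}}_s(\lozenge_{\leq r}g)$ is the probability that $\mathcal{M}$ started in $s$ reaches $g$ while having accumulated reward at most $r$. *)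

theory Defs
  imports "HOL-Probability.Probability"
begin

text \<open>A CTMC over a finite state type 's is given by transition probabilities
  P :: 's => 's pmf and exit rates E :: 's => real (assumed positive).
  A timed path is a stream of pairs (s_i, t_i): state s_i and residence time t_i.\<close>

definition ctmc_step :: "('s \<Rightarrow> 's pmf) \<Rightarrow> ('s \<Rightarrow> real) \<Rightarrow> 's \<Rightarrow> ('s \<times> real) measure" where
  "ctmc_step P E x = measure_pmf (P x) \<Otimes>\<^sub>M density lborel (exponential_density (E x))"

text \<open>Underlying probability space: i.i.d. sequence of independent samples, one per
  possible current state (random mapping representation).\<close>
definition ctmc_noise :: "('s \<Rightarrow> 's pmf) \<Rightarrow> ('s \<Rightarrow> real) \<Rightarrow> ('s \<Rightarrow> 's \<times> real) stream measure" where
  "ctmc_noise P E = stream_space (PiM UNIV (ctmc_step P E))"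

primcorec path_from :: "'s \<Rightarrow> ('s \<Rightarrow> 's \<times> real) stream \<Rightarrow> ('s \<times> real) stream" where
  "path_from x \<omega> = (x, snd (shd \<omega> x)) ## path_from (fst (shd \<omega> x)) (stl \<omega>)"

definition ctmc_paths :: "('s \<Rightarrow> 's pmf) \<Rightarrow> ('s \<Rightarrow> real) \<Rightarrow> 's \<Rightarrow> ('s \<times> real) stream measure" where
  "ctmc_paths P E s =
     distr (ctmc_noise P E) (stream_space (count_space UNIV \<Otimes>\<^sub>M borel)) (path_from s)"

definition st :: "('s \<times> real) stream \<Rightarrow> nat \<Rightarrow> 's" where
  "st \<sigma> i = fst (\<sigma> !! i)"

definition tm :: "('s \<times> real) stream \<Rightarrow> nat \<Rightarrow> real" where
  "tm \<sigma> i = snd (\<sigma> !! i)"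

definition idx_at :: "('s \<times> real) stream \<Rightarrow> real \<Rightarrow> nat" where
  "idx_at \<sigma> t = (LEAST m. t \<le> (\<Sum>i\<le>m. tm \<sigma> i))"

definition state_at :: "('s \<times> real) stream \<Rightarrow> real \<Rightarrow> 's" where
  "state_at \<sigma> t = st \<sigma> (idx_at \<sigma> t)"

definition cum_reward :: "('s \<Rightarrow> real) \<Rightarrow> ('s \<times> real) stream \<Rightarrow> real \<Rightarrow> real" where
  "cum_reward \<rho> \<sigma> t =
     (let m = idx_at \<sigma> t in
       (\<Sum>j<m. tm \<sigma> j * \<rho> (st \<sigma> j)) + (t - (\<Sum>j<m. tm \<sigma> j)) * \<rho> (st \<sigma> m))"

definition reach_bounded :: "('s \<Rightarrow> real) \<Rightarrow> 's \<Rightarrow> real \<Rightarrow> ('s \<times> real) stream set" where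
  "reach_bounded \<rho> g r = {\<sigma>. \<exists>t\<ge>0. state_at \<sigma> t = g \<and> cum_reward \<rho> \<sigma> t \<le> r}"

definition reach_prob :: "('s \<Rightarrow> 's pmf) \<Rightarrow> ('s \<Rightarrow> real) \<Rightarrow> ('s \<Rightarrow> real) \<Rightarrow> 's \<Rightarrow> 's \<Rightarrow> real \<Rightarrow> real" where
  "reach_prob P E \<rho> s g r = measure (ctmc_paths P E s) (reach_bounded \<rho> g r)"

definition absorbing :: "('s \<Rightarrow> 's pmf) \<Rightarrow> 's \<Rightarrow> bool" where
  "absorbing P x \<longleftrightarrow> pmf (P x) x = 1"

end

theory Submission
  imports Defs
begin

abbreviation PS :: "('s \<times> real) stream measure" where
  "PS \<equiv> stream_space (count_space UNIV \<Otimes>\<^sub>M borel)"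

lemma sets_step: "sets (ctmc_step P E x) = sets (count_space UNIV \<Otimes>\<^sub>M borel)"
  unfolding ctmc_step_def
  by (intro sets_pair_measure_cong) (auto simp: sets_measure_pmf_count_space)

lemma step_prob: "E x > 0 \<Longrightarrow> prob_space (ctmc_step P E x)"
  unfolding ctmc_step_def
  by (intro prob_space_pair prob_space_measure_pmf prob_space_exponential_density)

lemma noise_prob: "(\<And>x. E x > 0) \<Longrightarrow> prob_space (ctmc_noise P E)"
  unfolding ctmc_noise_def
  by (intro prob_space.prob_space_stream_space prob_space_PiM step_prob) auto

fun stt :: "'s \<Rightarrow> ('s \<Rightarrow> 's \<times> real) stream \<Rightarrow> nat \<Rightarrow> 's" where
  "stt x \<omega> 0 = x"
| "stt x \<omega> (Suc n) = fst ((\<omega> !! n) (stt x \<omega> n))"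

lemma stt_shift: "stt x \<omega> (Suc n) = stt (fst (shd \<omega> x)) (stl \<omega>) n"
  by (induction n) auto

lemma path_from_snth: "path_from x \<omega> !! n = (stt x \<omega> n, snd ((\<omega> !! n) (stt x \<omega> n)))"
proof (induction n arbitrary: x \<omega>)
  case 0 then show ?case by simp
next
  case (Suc n)
  show ?case by (simp add: Suc stt_shift del: stt.simps(2))
qed

lemma meas_stt: fixes x :: "'s::finite" shows "(\<lambda>\<omega>. stt x \<omega> n) \<in> measurable (ctmc_noise P E) (count_space UNIV)"
proof (induction n)
  case 0 then show ?case by simp
next
  case (Suc n)
  have c: "(\<lambda>\<omega>. (\<omega> !! n) y) \<in> measurable (ctmc_noise P E) (count_space UNIV \<Otimes>\<^sub>M borel)" for y
  proof -
    have "(\<lambda>\<omega>. (\<omega> !! n) y) \<in> measurable (ctmc_noise P E) (ctmc_step P E y)"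
      unfolding ctmc_noise_def by measurable
    then show ?thesis by (simp add: measurable_cong_sets[OF refl sets_step])
  qed
  have "(\<lambda>\<omega>. fst ((\<omega> !! n) (stt x \<omega> n))) \<in> measurable (ctmc_noise P E) (count_space UNIV)"
    by (rule measurable_compose_countable[where f="\<lambda>y \<omega>. fst ((\<omega> !! n) y)" and g="\<lambda>\<omega>. stt x \<omega> n", OF _ Suc])
      (rule measurable_compose[OF c measurable_fst])
  then show ?case by simp
qed

lemma meas_path_from: fixes x :: "'s::finite" shows "path_from x \<in> measurable (ctmc_noise P E) PS"
proof (rule measurable_stream_space2)
  fix n
  have c: "(\<lambda>\<omega>. (\<omega> !! n) y) \<in> measurable (ctmc_noise P E) (count_space UNIV \<Otimes>\<^sub>M borel)" for y
  proof -
    have "(\<lambda>\<omega>. (\<omega> !! n) y) \<in> measurable (ctmc_noise P E) (ctmc_step P E y)"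
      unfolding ctmc_noise_def by measurable
    then show ?thesis by (simp add: measurable_cong_sets[OF refl sets_step])
  qed
  have "(\<lambda>\<omega>. (stt x \<omega> n, snd ((\<omega> !! n) (stt x \<omega> n)))) \<in> measurable (ctmc_noise P E) (count_space UNIV \<Otimes>\<^sub>M borel)"
    apply (rule measurable_Pair)
     apply (rule measurable_compose[OF meas_stt], simp)
    apply (rule measurable_compose_countable[where f="\<lambda>y \<omega>. snd ((\<omega> !! n) y)" and g="\<lambda>\<omega>. stt x \<omega> n", OF _ meas_stt])
    apply (rule measurable_compose[OF c measurable_snd])
    done
  then show "(\<lambda>\<omega>. path_from x \<omega> !! n) \<in> measurable (ctmc_noise P E) (count_space UNIV \<Otimes>\<^sub>M borel)"
    by (simp add: path_from_snth)
qed

lemma space_noise: "space (ctmc_noise P E) = UNIV"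
  by (auto simp: ctmc_noise_def space_stream_space space_PiM ctmc_step_def space_pair_measure streams_UNIV)

lemma space_PS: "space PS = UNIV"
  by (auto simp: space_stream_space space_pair_measure streams_UNIV)

lemma paths_prob: "(\<And>x. E x > 0) \<Longrightarrow> prob_space (ctmc_paths P E x)"
  for x :: "'s::finite"
  unfolding ctmc_paths_def
  by (intro prob_space.prob_space_distr noise_prob meas_path_from)

lemma sets_paths: "sets (ctmc_paths P E x) = sets PS"
  by (simp add: ctmc_paths_def)

lemma cons_pre_sets: "A \<in> sets PS \<Longrightarrow> {\<sigma>. (x, t) ## \<sigma> \<in> A} \<in> sets PS"
proof -
  assume A: "A \<in> sets PS"
  have m: "(\<lambda>\<sigma>. (x, t) ## \<sigma>) \<in> measurable PS PS"
    by (intro measurable_Stream measurable_const measurable_ident_sets) (auto simp: space_pair_measure)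
  have "(\<lambda>\<sigma>. (x, t) ## \<sigma>) -` A \<inter> space PS \<in> sets PS"
    using measurable_sets[OF m A] .
  then show ?thesis by (simp add: space_PS vimage_def)
qed

lemma markov:
  fixes x :: "'s::finite"
  assumes E: "\<And>x. E x > 0" and A: "A \<in> sets PS"
  shows "emeasure (ctmc_paths P E x) A =
    (\<integral>\<^sup>+z. emeasure (ctmc_paths P E (fst z)) {\<sigma>. (x, snd z) ## \<sigma> \<in> A} \<partial>ctmc_step P E x)"
proof -
  let ?M = "PiM UNIV (ctmc_step P E)"
  interpret M: prob_space ?M by (intro prob_space_PiM step_prob E)
  define G where "G = (\<lambda>z::'s \<times> real. emeasure (ctmc_paths P E (fst z)) {\<sigma>. (x, snd z) ## \<sigma> \<in> A})"
  have Gy: "(\<lambda>t. emeasure (ctmc_paths P E y) {\<sigma>. (x, t) ## \<sigma> \<in> A}) \<in> borel_measurable borel" for y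
  proof -
    interpret Q: prob_space "ctmc_paths P E y" by (rule paths_prob[OF E])
    have Qs: "{(t, \<sigma>). (x, t) ## \<sigma> \<in> A} \<in> sets (borel \<Otimes>\<^sub>M ctmc_paths P E y)"
    proof -
      have m: "(\<lambda>p. (x, fst p) ## snd p) \<in> measurable (borel \<Otimes>\<^sub>M ctmc_paths P E y) PS"
        by (intro measurable_Stream measurable_Pair measurable_const measurable_fst'' measurable_snd'')
           (auto simp: space_pair_measure intro: measurable_ident_sets[OF sets_paths])
      have "(\<lambda>p. (x, fst p) ## snd p) -` A \<inter> space (borel \<Otimes>\<^sub>M ctmc_paths P E y) \<in> sets (borel \<Otimes>\<^sub>M ctmc_paths P E y)"
        using measurable_sets[OF m A] .
      moreover have "space (borel \<Otimes>\<^sub>M ctmc_paths P E y) = UNIV"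
        by (simp add: space_pair_measure ctmc_paths_def space_PS)
      moreover have "{xa. (x, fst xa) ## snd xa \<in> A} = {(t, \<sigma>). (x, t) ## \<sigma> \<in> A}" by auto
      ultimately show ?thesis unfolding vimage_def by (metis (no_types, lifting) Int_UNIV_right)
    qed
    show ?thesis
      using Q.measurable_emeasure_Pair[OF Qs] by (simp add: vimage_def)
  qed
  have Gm: "G \<in> borel_measurable (ctmc_step P E x)"
  proof -
    have "(\<lambda>z. (\<lambda>y z. emeasure (ctmc_paths P E y) {\<sigma>. (x, snd z) ## \<sigma> \<in> A}) (fst z) z) \<in> borel_measurable (ctmc_step P E x)"
      apply (rule measurable_compose_countable[where f="\<lambda>y z. emeasure (ctmc_paths P E y) {\<sigma>. (x, snd z) ## \<sigma> \<in> A}" and g=fst])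
       apply (rule measurable_compose[OF _ Gy])
       apply (simp add: measurable_cong_sets[OF sets_step refl])
      apply (simp add: measurable_cong_sets[OF sets_step refl])
      done
    then show ?thesis by (simp add: G_def)
  qed
  have pA: "path_from x -` A \<in> sets (ctmc_noise P E)"
    using measurable_sets[OF meas_path_from A] by (simp add: space_noise)
  have "emeasure (ctmc_paths P E x) A = emeasure (ctmc_noise P E) (path_from x -` A)"
    unfolding ctmc_paths_def by (subst emeasure_distr[OF meas_path_from A]) (simp add: space_noise)
  also have "\<dots> = (\<integral>\<^sup>+a. emeasure (ctmc_noise P E) {\<omega> \<in> space (ctmc_noise P E). a ## \<omega> \<in> path_from x -` A} \<partial>?M)"
    using M.emeasure_stream_space[of "path_from x -` A"] pA by (simp add: ctmc_noise_def)
  also have "\<dots> = (\<integral>\<^sup>+a. G (a x) \<partial>?M)"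
  proof (rule nn_integral_cong)
    fix a :: "'s \<Rightarrow> 's \<times> real"
    have eq: "{\<omega> \<in> space (ctmc_noise P E). a ## \<omega> \<in> path_from x -` A} =
      path_from (fst (a x)) -` {\<sigma>. (x, snd (a x)) ## \<sigma> \<in> A} \<inter> space (ctmc_noise P E)"
      by (auto simp: space_noise path_from.code[of x "a ## _"])
    show "emeasure (ctmc_noise P E) {\<omega> \<in> space (ctmc_noise P E). a ## \<omega> \<in> path_from x -` A} = G (a x)"
      unfolding eq G_def ctmc_paths_def
      by (subst emeasure_distr[OF meas_path_from cons_pre_sets[OF A]]) simp
  qed
  also have "\<dots> = (\<integral>\<^sup>+z. G z \<partial>distr ?M (ctmc_step P E x) (\<lambda>a. a x))"
    by (rule nn_integral_distr[symmetric]) (auto intro: measurable_component_singleton simp: Gm)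
  also have "distr ?M (ctmc_step P E x) (\<lambda>a. a x) = ctmc_step P E x"
    by (rule distr_PiM_component) (auto intro: step_prob E)
  finally show ?thesis by (simp add: G_def)
qed

definition Acc :: "('s \<Rightarrow> real) \<Rightarrow> ('s \<times> real) stream \<Rightarrow> nat \<Rightarrow> real" where
  "Acc \<rho> \<sigma> n = (\<Sum>j<n. tm \<sigma> j * \<rho> (st \<sigma> j))"

definition Hs :: "('s \<Rightarrow> real) \<Rightarrow> 's \<Rightarrow> real \<Rightarrow> nat \<Rightarrow> ('s \<times> real) stream set" where
  "Hs \<rho> g r N = {\<sigma>. \<exists>n<N. st \<sigma> n = g \<and> Acc \<rho> \<sigma> n < r}"

definition Hinf :: "('s \<Rightarrow> real) \<Rightarrow> 's \<Rightarrow> real \<Rightarrow> ('s \<times> real) stream set" where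
  "Hinf \<rho> g r = {\<sigma>. \<exists>n. st \<sigma> n = g \<and> Acc \<rho> \<sigma> n < r}"

lemma st_Cons0[simp]: "st (a ## \<sigma>) 0 = fst a" by (simp add: st_def)
lemma st_ConsS[simp]: "st (a ## \<sigma>) (Suc n) = st \<sigma> n" by (simp add: st_def)
lemma tm_Cons0[simp]: "tm (a ## \<sigma>) 0 = snd a" by (simp add: tm_def)
lemma tm_ConsS[simp]: "tm (a ## \<sigma>) (Suc n) = tm \<sigma> n" by (simp add: tm_def)
lemma Acc_0[simp]: "Acc \<rho> \<sigma> 0 = 0" by (simp add: Acc_def)
lemma Acc_ConsS[simp]: "Acc \<rho> (a ## \<sigma>) (Suc n) = snd a * \<rho> (fst a) + Acc \<rho> \<sigma> n"
  unfolding Acc_def sum.lessThan_Suc_shift by simp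

lemma Hs_0[simp]: "Hs \<rho> g r 0 = {}" by (simp add: Hs_def)

lemma Hs_Suc: "(a ## \<sigma> \<in> Hs \<rho> g r (Suc N)) \<longleftrightarrow> (fst a = g \<and> 0 < r) \<or> \<sigma> \<in> Hs \<rho> g (r - snd a * \<rho> (fst a)) N"
proof -
  have "(\<exists>n<Suc N. st (a ## \<sigma>) n = g \<and> Acc \<rho> (a ## \<sigma>) n < r) \<longleftrightarrow>
    (st (a ## \<sigma>) 0 = g \<and> Acc \<rho> (a ## \<sigma>) 0 < r) \<or> (\<exists>m<N. st (a ## \<sigma>) (Suc m) = g \<and> Acc \<rho> (a ## \<sigma>) (Suc m) < r)"
    by (metis less_Suc_eq_0_disj Suc_less_eq zero_less_Suc)
  then show ?thesis by (auto simp: Hs_def algebra_simps)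
qed

lemma Hinf_Cons: "(a ## \<sigma> \<in> Hinf \<rho> g r) \<longleftrightarrow> (fst a = g \<and> 0 < r) \<or> \<sigma> \<in> Hinf \<rho> g (r - snd a * \<rho> (fst a))"
proof -
  have "(\<exists>n. st (a ## \<sigma>) n = g \<and> Acc \<rho> (a ## \<sigma>) n < r) \<longleftrightarrow>
    (st (a ## \<sigma>) 0 = g \<and> Acc \<rho> (a ## \<sigma>) 0 < r) \<or> (\<exists>m. st (a ## \<sigma>) (Suc m) = g \<and> Acc \<rho> (a ## \<sigma>) (Suc m) < r)"
    by (metis not0_implies_Suc)
  then show ?thesis by (auto simp: Hinf_def algebra_simps)
qed

lemma Hinf_Un: "Hinf \<rho> g r = (\<Union>N. Hs \<rho> g r N)"
  by (auto simp: Hinf_def Hs_def)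

lemma Hs_mono: "incseq (Hs \<rho> g r)"
  unfolding incseq_def Hs_def by (auto dest: order_less_le_trans)

lemma meas_st[measurable]: "(\<lambda>\<sigma>. st \<sigma> n) \<in> measurable PS (count_space UNIV)"
  unfolding st_def by measurable

lemma meas_tm[measurable]: "(\<lambda>\<sigma>. tm \<sigma> n) \<in> borel_measurable PS"
  unfolding tm_def by measurable

lemma meas_rho_st[measurable]: "(\<lambda>\<sigma>. \<rho> (st \<sigma> n)) \<in> borel_measurable PS"
  by (rule measurable_compose[OF meas_st]) simp

lemma meas_Acc[measurable]: "(\<lambda>\<sigma>. Acc \<rho> \<sigma> n) \<in> borel_measurable PS"
  unfolding Acc_def by measurable

lemma sets_Hs[measurable]: "Hs \<rho> g r N \<in> sets PS"
proof -
  have "{\<sigma> \<in> space PS. \<exists>n<N. st \<sigma> n = g \<and> Acc \<rho> \<sigma> n < r} \<in> sets PS" by measurable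
  then show ?thesis by (simp add: Hs_def space_PS)
qed

lemma sets_Hinf[measurable]: "Hinf \<rho> g r \<in> sets PS"
  unfolding Hinf_Un by measurable

definition Top :: "('s \<Rightarrow> 's pmf) \<Rightarrow> ('s \<Rightarrow> real) \<Rightarrow> ('s \<Rightarrow> real) \<Rightarrow> 's \<Rightarrow> ('s \<Rightarrow> real \<Rightarrow> ennreal) \<Rightarrow> 's \<Rightarrow> real \<Rightarrow> ennreal" where
  "Top P E \<rho> g f x r = (if x = g \<and> 0 < r then 1 else \<integral>\<^sup>+z. f (fst z) (r - snd z * \<rho> x) \<partial>ctmc_step P E x)"

definition hN :: "('s \<Rightarrow> 's pmf) \<Rightarrow> ('s \<Rightarrow> real) \<Rightarrow> ('s \<Rightarrow> real) \<Rightarrow> 's \<Rightarrow> nat \<Rightarrow> 's \<Rightarrow> real \<Rightarrow> ennreal" where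
  "hN P E \<rho> g N x r = emeasure (ctmc_paths P E x) (Hs \<rho> g r N)"

definition hh :: "('s \<Rightarrow> 's pmf) \<Rightarrow> ('s \<Rightarrow> real) \<Rightarrow> ('s \<Rightarrow> real) \<Rightarrow> 's \<Rightarrow> 's \<Rightarrow> real \<Rightarrow> ennreal" where
  "hh P E \<rho> g x r = emeasure (ctmc_paths P E x) (Hinf \<rho> g r)"

lemma Top_mono: "(\<And>y r. f y r \<le> f' y r) \<Longrightarrow> Top P E \<rho> g f x r \<le> Top P E \<rho> g f' x r"
  unfolding Top_def by (auto intro!: nn_integral_mono)

lemma space_paths: "space (ctmc_paths P E x) = UNIV"
  by (simp add: ctmc_paths_def space_PS)

lemma int_one:
  fixes P :: "'s::finite \<Rightarrow> 's pmf"
  assumes E: "\<And>x. E x > 0"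
  shows "(\<integral>\<^sup>+z. emeasure (ctmc_paths P E (fst z)) UNIV \<partial>ctmc_step P E x) = 1"
proof -
  have "emeasure (ctmc_paths P E y) UNIV = 1" for y :: 's
    using prob_space.emeasure_space_1[OF paths_prob[OF E, where P=P and x=y]] by (simp add: space_paths)
  then have "(\<integral>\<^sup>+z. emeasure (ctmc_paths P E (fst z)) UNIV \<partial>ctmc_step P E x) = (\<integral>\<^sup>+z. 1 \<partial>ctmc_step P E x)"
    by simp
  also have "\<dots> = 1"
    using prob_space.emeasure_space_1[OF step_prob[where E=E and x=x and P=P, OF E]] by simp
  finally show ?thesis .
qed

lemma hN_Suc:
  fixes x :: "'s::finite"
  assumes E: "\<And>x. E x > 0"
  shows "hN P E \<rho> g (Suc N) x r = Top P E \<rho> g (hN P E \<rho> g N) x r"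
proof -
  have eq1: "x = g \<and> 0 < r \<Longrightarrow> {\<sigma>. (x, snd z) ## \<sigma> \<in> Hs \<rho> g r (Suc N)} = UNIV" for z :: "'s \<times> real"
    by (auto simp: Hs_Suc)
  have eq2: "\<not> (x = g \<and> 0 < r) \<Longrightarrow> {\<sigma>. (x, snd z) ## \<sigma> \<in> Hs \<rho> g r (Suc N)} = Hs \<rho> g (r - snd z * \<rho> x) N" for z :: "'s \<times> real"
    by (auto simp: Hs_Suc)
  show ?thesis
  proof (cases "x = g \<and> 0 < r")
    case True
    have "hN P E \<rho> g (Suc N) x r = (\<integral>\<^sup>+z. emeasure (ctmc_paths P E (fst z)) UNIV \<partial>ctmc_step P E x)"
      unfolding hN_def by (subst markov[OF E sets_Hs]) (simp only: eq1[OF True])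
    also have "\<dots> = 1" by (rule int_one[OF E])
    finally show ?thesis using True by (simp add: Top_def)
  next
    case False
    show ?thesis
      unfolding hN_def by (subst markov[OF E sets_Hs]) (simp only: eq2[OF False] Top_def hN_def if_False False)
  qed
qed

lemma hh_fix:
  fixes x :: "'s::finite"
  assumes E: "\<And>x. E x > 0"
  shows "hh P E \<rho> g x r = Top P E \<rho> g (hh P E \<rho> g) x r"
proof -
  have eq1: "x = g \<and> 0 < r \<Longrightarrow> {\<sigma>. (x, snd z) ## \<sigma> \<in> Hinf \<rho> g r} = UNIV" for z :: "'s \<times> real"
    by (auto simp: Hinf_Cons)
  have eq2: "\<not> (x = g \<and> 0 < r) \<Longrightarrow> {\<sigma>. (x, snd z) ## \<sigma> \<in> Hinf \<rho> g r} = Hinf \<rho> g (r - snd z * \<rho> x)" for z :: "'s \<times> real"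
    by (auto simp: Hinf_Cons)
  show ?thesis
  proof (cases "x = g \<and> 0 < r")
    case True
    have "hh P E \<rho> g x r = (\<integral>\<^sup>+z. emeasure (ctmc_paths P E (fst z)) UNIV \<partial>ctmc_step P E x)"
      unfolding hh_def by (subst markov[OF E sets_Hinf]) (simp only: eq1[OF True])
    also have "\<dots> = 1" by (rule int_one[OF E])
    finally show ?thesis using True by (simp add: Top_def)
  next
    case False
    show ?thesis
      unfolding hh_def by (subst markov[OF E sets_Hinf]) (simp only: eq2[OF False] Top_def hh_def if_False False)
  qed
qed

lemma hh_SUP: "hh P E \<rho> g x r = (SUP N. hN P E \<rho> g N x r)"
  unfolding hh_def hN_def Hinf_Un
  by (rule SUP_emeasure_incseq[symmetric]) (auto simp: sets_paths intro: Hs_mono)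

lemma hh_least:
  fixes x :: "'s::finite"
  assumes E: "\<And>x. E x > 0" and pre: "\<And>y r. Top P E \<rho> g f y r \<le> f y r"
  shows "hh P E \<rho> g x r \<le> f x r"
proof -
  have "hN P E \<rho> g N y r \<le> f y r" for N y r
  proof (induction N arbitrary: y r)
    case 0 then show ?case by (simp add: hN_def)
  next
    case (Suc N)
    have "hN P E \<rho> g (Suc N) y r = Top P E \<rho> g (hN P E \<rho> g N) y r" by (rule hN_Suc[OF E])
    also have "\<dots> \<le> Top P E \<rho> g f y r" by (rule Top_mono) (rule Suc)
    also have "\<dots> \<le> f y r" by (rule pre)
    finally show ?case .
  qed
  then show ?thesis unfolding hh_SUP by (auto intro: SUP_least)
qed


lemma int_fst:
  fixes P :: "'s::finite \<Rightarrow> 's pmf"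
  assumes E: "E x > 0"
  shows "(\<integral>\<^sup>+z. F (fst z) \<partial>ctmc_step P E x) = (\<Sum>y\<in>UNIV. ennreal (pmf (P x) y) * F y)"
proof -
  interpret D: prob_space "density lborel (exponential_density (E x))"
    by (rule prob_space_exponential_density[OF E])
  have "(\<integral>\<^sup>+z. F (fst z) \<partial>ctmc_step P E x) =
      (\<integral>\<^sup>+y. F y \<partial>distr (measure_pmf (P x) \<Otimes>\<^sub>M density lborel (exponential_density (E x))) (measure_pmf (P x)) fst)"
    unfolding ctmc_step_def by (subst nn_integral_distr) auto
  also have "distr (measure_pmf (P x) \<Otimes>\<^sub>M density lborel (exponential_density (E x))) (measure_pmf (P x)) fst = measure_pmf (P x)"
    by (rule D.distr_pair_fst)
  also have "(\<integral>\<^sup>+y. F y \<partial>measure_pmf (P x)) = (\<Sum>y\<in>UNIV. ennreal (pmf (P x) y) * F y)"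
    by (simp add: nn_integral_measure_pmf nn_integral_count_space_finite)
  finally show ?thesis .
qed

lemma exp_nonpos_null:
  assumes l: "0 < l"
  shows "emeasure (density lborel (exponential_density l)) {..0} = 0"
proof -
  have "emeasure (density lborel (exponential_density l)) {..0} =
      (\<integral>\<^sup>+t. ennreal (exponential_density l t) * indicator {..0} t \<partial>lborel)"
    by (rule emeasure_density) auto
  also have "\<dots> = 0"
    using AE_lborel_singleton[of "0::real"]
    by (subst nn_integral_0_iff_AE) (auto elim!: eventually_mono simp: exponential_density_def indicator_def)
  finally show ?thesis by simp
qed

lemma step_nonpos_null:
  fixes P :: "'s::finite \<Rightarrow> 's pmf"
  assumes E: "E x > 0"
  shows "emeasure (ctmc_step P E x) {z. snd z \<le> 0} = 0"
proof -
  interpret D: prob_space "density lborel (exponential_density (E x))"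
    by (rule prob_space_exponential_density[OF E])
  have "{z::'s \<times> real. snd z \<le> 0} = UNIV \<times> {..0}" by auto
  then have "emeasure (ctmc_step P E x) {z. snd z \<le> 0} =
     emeasure (measure_pmf (P x)) UNIV * emeasure (density lborel (exponential_density (E x))) {..0}"
    unfolding ctmc_step_def by (simp add: D.emeasure_pair_measure_Times)
  then show ?thesis by (simp add: exp_nonpos_null[OF E])
qed

lemma tm_null:
  fixes P :: "'s::finite \<Rightarrow> 's pmf"
  assumes E: "\<And>x. E x > 0"
  shows "emeasure (ctmc_paths P E x) {\<sigma>. tm \<sigma> n \<le> 0} = 0"
proof (induction n arbitrary: x)
  case 0
  have s: "{\<sigma>. tm \<sigma> 0 \<le> 0} \<in> sets PS"
  proof -
    have "{\<sigma> \<in> space PS. tm \<sigma> 0 \<le> 0} \<in> sets PS" by measurable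
    then show ?thesis by (simp add: space_PS)
  qed
  have "emeasure (ctmc_paths P E x) {\<sigma>. tm \<sigma> 0 \<le> 0} =
     (\<integral>\<^sup>+z. emeasure (ctmc_paths P E (fst z)) {\<sigma>. tm ((x, snd z) ## \<sigma>) 0 \<le> 0} \<partial>ctmc_step P E x)"
    by (subst markov[OF E s]) simp
  also have "\<dots> \<le> (\<integral>\<^sup>+z. indicator {z. snd z \<le> 0} z \<partial>ctmc_step P E x)"
  proof (rule nn_integral_mono)
    fix z :: "'s \<times> real"
    show "emeasure (ctmc_paths P E (fst z)) {\<sigma>. tm ((x, snd z) ## \<sigma>) 0 \<le> 0} \<le> indicator {z. snd z \<le> 0} z"
    proof (cases "snd z \<le> 0")
      case True
      have "emeasure (ctmc_paths P E (fst z)) {\<sigma>. tm ((x, snd z) ## \<sigma>) 0 \<le> 0} \<le> 1"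
        by (rule prob_space.emeasure_le_1[OF paths_prob[where E=E and P=P and x="fst z", OF E]])
      then show ?thesis using True by simp
    next
      case False
      then show ?thesis by simp
    qed
  qed
  also have "\<dots> = emeasure (ctmc_step P E x) {z. snd z \<le> 0}"
  proof (rule nn_integral_indicator)
    have "{z::'s \<times> real. snd z \<le> 0} = UNIV \<times> {..0}" by auto
    then show "{z::'s \<times> real. snd z \<le> 0} \<in> sets (ctmc_step P E x)"
      by (simp add: sets_step)
  qed
  also have "\<dots> = 0" by (rule step_nonpos_null[OF E])
  finally show ?case by simp
next
  case (Suc n)
  have s: "{\<sigma>. tm \<sigma> (Suc n) \<le> 0} \<in> sets PS"
  proof -
    have "{\<sigma> \<in> space PS. tm \<sigma> (Suc n) \<le> 0} \<in> sets PS" by measurable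
    then show ?thesis by (simp add: space_PS)
  qed
  have "emeasure (ctmc_paths P E x) {\<sigma>. tm \<sigma> (Suc n) \<le> 0} =
     (\<integral>\<^sup>+z. emeasure (ctmc_paths P E (fst z)) {\<sigma>. tm ((x, snd z) ## \<sigma>) (Suc n) \<le> 0} \<partial>ctmc_step P E x)"
    by (subst markov[OF E s]) simp
  also have "\<dots> = (\<integral>\<^sup>+z. 0 \<partial>ctmc_step P E x)"
    by (simp add: Suc)
  finally show ?case by simp
qed

lemma AE_tm_pos:
  fixes P :: "'s::finite \<Rightarrow> 's pmf"
  assumes E: "\<And>x. E x > 0"
  shows "AE \<sigma> in ctmc_paths P E x. \<forall>n. tm \<sigma> n > 0"
proof -
  have "AE \<sigma> in ctmc_paths P E x. tm \<sigma> n > 0" for n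
  proof (rule AE_I[where N="{\<sigma>. tm \<sigma> n \<le> 0}"])
    show "emeasure (ctmc_paths P E x) {\<sigma>. tm \<sigma> n \<le> 0} = 0" by (rule tm_null[OF E])
    have "{\<sigma> \<in> space PS. tm \<sigma> n \<le> 0} \<in> sets PS" by measurable
    then show "{\<sigma>. tm \<sigma> n \<le> 0} \<in> sets (ctmc_paths P E x)" by (simp add: space_PS sets_paths)
  qed auto
  then show ?thesis by (simp add: AE_all_countable)
qed

lemma AE_st0:
  fixes P :: "'s::finite \<Rightarrow> 's pmf"
  assumes E: "\<And>x. E x > 0"
  shows "AE \<sigma> in ctmc_paths P E x. st \<sigma> 0 = x"
proof (rule AE_I[where N="{\<sigma>. st \<sigma> 0 \<noteq> x}"])
  have s: "{\<sigma>. st \<sigma> 0 \<noteq> x} \<in> sets PS"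
  proof -
    have "{\<sigma> \<in> space PS. st \<sigma> 0 \<noteq> x} \<in> sets PS" by measurable
    then show ?thesis by (simp add: space_PS)
  qed
  then show "{\<sigma>. st \<sigma> 0 \<noteq> x} \<in> sets (ctmc_paths P E x)" by (simp add: sets_paths)
  show "emeasure (ctmc_paths P E x) {\<sigma>. st \<sigma> 0 \<noteq> x} = 0"
    by (subst markov[OF E s]) simp
qed auto


lemma S_mono:
  assumes pos: "\<forall>n. tm \<sigma> n > 0" and "k \<le> m"
  shows "(\<Sum>i\<le>k. tm \<sigma> i) \<le> (\<Sum>i\<le>m. tm \<sigma> i)"
  by (rule sum_mono2) (use assms in \<open>auto intro: less_imp_le\<close>)

lemma reach_char:
  fixes \<sigma> :: "('s \<times> real) stream"
  assumes pos: "\<forall>n. tm \<sigma> n > 0" and st0: "st \<sigma> 0 \<noteq> g"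
    and rho: "\<And>x. \<rho> x \<ge> 0" and rg: "\<rho> g > 0"
  shows "\<sigma> \<in> reach_bounded \<rho> g r \<longleftrightarrow> \<sigma> \<in> Hinf \<rho> g r"
proof
  assume "\<sigma> \<in> reach_bounded \<rho> g r"
  then obtain t where t0: "t \<ge> 0" and sg: "state_at \<sigma> t = g" and cr: "cum_reward \<rho> \<sigma> t \<le> r"
    by (auto simp: reach_bounded_def)
  define m where "m = idx_at \<sigma> t"
  have stm: "st \<sigma> m = g" using sg by (simp add: state_at_def m_def)
  have tB: "t > (\<Sum>j<m. tm \<sigma> j)"
  proof (cases "\<exists>k. t \<le> (\<Sum>i\<le>k. tm \<sigma> i)")
    case True
    have mL: "m = (LEAST k. t \<le> (\<Sum>i\<le>k. tm \<sigma> i))" by (simp add: m_def idx_at_def)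
    show ?thesis
    proof (cases m)
      case 0
      with stm st0 show ?thesis by simp
    next
      case (Suc m')
      have "\<not> t \<le> (\<Sum>i\<le>m'. tm \<sigma> i)"
        using not_less_Least[of m' "\<lambda>k. t \<le> (\<Sum>i\<le>k. tm \<sigma> i)"] mL Suc by auto
      then show ?thesis using Suc by (simp add: lessThan_Suc_atMost)
    qed
  next
    case False
    then have "t > (\<Sum>i\<le>m. tm \<sigma> i)" by (meson not_le)
    moreover have "(\<Sum>i\<le>m. tm \<sigma> i) = (\<Sum>j<m. tm \<sigma> j) + tm \<sigma> m"
      by (simp add: lessThan_Suc_atMost[symmetric])
    ultimately show ?thesis using pos by (metis add.commute less_add_same_cancel2 order.strict_trans)
  qed
  have cr': "cum_reward \<rho> \<sigma> t = Acc \<rho> \<sigma> m + (t - (\<Sum>j<m. tm \<sigma> j)) * \<rho> g"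
    by (simp add: cum_reward_def Let_def m_def[symmetric] Acc_def stm)
  have "(t - (\<Sum>j<m. tm \<sigma> j)) * \<rho> g > 0" using tB rg by simp
  then have "Acc \<rho> \<sigma> m < r" using cr cr' by linarith
  then show "\<sigma> \<in> Hinf \<rho> g r" using stm by (auto simp: Hinf_def)
next
  assume "\<sigma> \<in> Hinf \<rho> g r"
  then obtain n where stn: "st \<sigma> n = g" and An: "Acc \<rho> \<sigma> n < r" by (auto simp: Hinf_def)
  obtain m where n: "n = Suc m" using st0 stn by (cases n) auto
  define B where "B = (\<Sum>j<n. tm \<sigma> j)"
  have BS: "B = (\<Sum>i\<le>m. tm \<sigma> i)" by (simp add: B_def n lessThan_Suc_atMost)
  have B0: "B \<ge> 0" unfolding B_def using pos by (auto intro: sum_nonneg less_imp_le)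
  define \<delta> where "\<delta> = min (tm \<sigma> n) ((r - Acc \<rho> \<sigma> n) / \<rho> g)"
  have d0: "\<delta> > 0" using pos An rg by (simp add: \<delta>_def)
  define t where "t = B + \<delta>"
  have Sn: "(\<Sum>i\<le>n. tm \<sigma> i) = B + tm \<sigma> n"
    by (simp add: B_def lessThan_Suc_atMost[symmetric])
  have idx: "idx_at \<sigma> t = n"
    unfolding idx_at_def
  proof (rule Least_equality)
    show "t \<le> (\<Sum>i\<le>n. tm \<sigma> i)" using Sn by (simp add: t_def \<delta>_def)
  next
    fix k assume k: "t \<le> (\<Sum>i\<le>k. tm \<sigma> i)"
    show "n \<le> k"
    proof (rule ccontr)
      assume "\<not> n \<le> k"
      then have "k \<le> m" using n by simp
      then have "(\<Sum>i\<le>k. tm \<sigma> i) \<le> B" using S_mono[OF pos] BS by simp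
      with k d0 show False by (simp add: t_def)
    qed
  qed
  have "cum_reward \<rho> \<sigma> t = Acc \<rho> \<sigma> n + (t - B) * \<rho> g"
    by (simp add: cum_reward_def Let_def idx Acc_def stn B_def)
  also have "\<dots> = Acc \<rho> \<sigma> n + \<delta> * \<rho> g" by (simp add: t_def)
  also have "\<dots> \<le> Acc \<rho> \<sigma> n + ((r - Acc \<rho> \<sigma> n) / \<rho> g) * \<rho> g"
    using rg by (intro add_left_mono mult_right_mono) (auto simp: \<delta>_def)
  also have "\<dots> = r" using rg by simp
  finally have "cum_reward \<rho> \<sigma> t \<le> r" .
  moreover have "state_at \<sigma> t = g" by (simp add: state_at_def idx stn)
  moreover have "t \<ge> 0" using B0 d0 by (simp add: t_def)
  ultimately show "\<sigma> \<in> reach_bounded \<rho> g r" by (auto simp: reach_bounded_def)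
qed

lemma idx_iff:
  "idx_at \<sigma> t = m \<longleftrightarrow>
    (t \<le> (\<Sum>i\<le>m. tm \<sigma> i) \<and> (\<forall>k<m. (\<Sum>i\<le>k. tm \<sigma> i) < t)) \<or>
    ((\<forall>k. (\<Sum>i\<le>k. tm \<sigma> i) < t) \<and> m = (LEAST m::nat. False))"
proof (cases "\<exists>k. t \<le> (\<Sum>i\<le>k. tm \<sigma> i)")
  case True
  have "(LEAST k. t \<le> (\<Sum>i\<le>k. tm \<sigma> i)) = m \<longleftrightarrow> (t \<le> (\<Sum>i\<le>m. tm \<sigma> i) \<and> (\<forall>k<m. (\<Sum>i\<le>k. tm \<sigma> i) < t))"
  proof
    assume L: "(LEAST k. t \<le> (\<Sum>i\<le>k. tm \<sigma> i)) = m"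
    show "t \<le> (\<Sum>i\<le>m. tm \<sigma> i) \<and> (\<forall>k<m. (\<Sum>i\<le>k. tm \<sigma> i) < t)"
      using LeastI_ex[OF True] not_less_Least[of _ "\<lambda>k. t \<le> (\<Sum>i\<le>k. tm \<sigma> i)"] L
      by (auto simp: not_le)
  next
    assume A: "t \<le> (\<Sum>i\<le>m. tm \<sigma> i) \<and> (\<forall>k<m. (\<Sum>i\<le>k. tm \<sigma> i) < t)"
    show "(LEAST k. t \<le> (\<Sum>i\<le>k. tm \<sigma> i)) = m"
      by (rule Least_equality) (use A in \<open>auto simp: not_le intro: leI\<close>)
  qed
  moreover have "\<not> (\<forall>k. (\<Sum>i\<le>k. tm \<sigma> i) < t)" using True by (auto simp: not_less)
  ultimately show ?thesis unfolding idx_at_def by blast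
next
  case False
  then have "(\<lambda>k. t \<le> (\<Sum>i\<le>k. tm \<sigma> i)) = (\<lambda>_. False)" by auto
  then have "idx_at \<sigma> t = (LEAST m::nat. False)" by (simp add: idx_at_def)
  moreover have "\<not> (t \<le> (\<Sum>i\<le>m. tm \<sigma> i) \<and> (\<forall>k<m. (\<Sum>i\<le>k. tm \<sigma> i) < t))" using False by blast
  moreover have "\<forall>k. (\<Sum>i\<le>k. tm \<sigma> i) < t" using False by (simp add: not_le)
  ultimately show ?thesis by auto
qed

lemma ex_t_iff:
  fixes V Sm :: real and Sk :: "nat \<Rightarrow> real"
  shows "(\<exists>t. 0 \<le> t \<and> t \<le> V \<and> ((t \<le> Sm \<and> (\<forall>k<m. Sk k < t)) \<or> ((\<forall>k. Sk k < t) \<and> b))) \<longleftrightarrow>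
    (0 \<le> min Sm V \<and> (\<forall>k<m. Sk k < min Sm V)) \<or> (b \<and> 0 \<le> V \<and> (\<forall>k. Sk k < V))"
proof
  assume "\<exists>t. 0 \<le> t \<and> t \<le> V \<and> ((t \<le> Sm \<and> (\<forall>k<m. Sk k < t)) \<or> ((\<forall>k. Sk k < t) \<and> b))"
  then obtain t where t: "0 \<le> t" "t \<le> V" "(t \<le> Sm \<and> (\<forall>k<m. Sk k < t)) \<or> ((\<forall>k. Sk k < t) \<and> b)" by blast
  show "(0 \<le> min Sm V \<and> (\<forall>k<m. Sk k < min Sm V)) \<or> (b \<and> 0 \<le> V \<and> (\<forall>k. Sk k < V))"
    using t(3)
  proof
    assume A: "t \<le> Sm \<and> (\<forall>k<m. Sk k < t)"
    then have "0 \<le> min Sm V" using t by simp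
    moreover have "\<forall>k<m. Sk k < min Sm V" using A t by (auto simp: min_def)
    ultimately show ?thesis by blast
  next
    assume A: "(\<forall>k. Sk k < t) \<and> b"
    then show ?thesis using t by (auto intro: less_le_trans)
  qed
next
  assume "(0 \<le> min Sm V \<and> (\<forall>k<m. Sk k < min Sm V)) \<or> (b \<and> 0 \<le> V \<and> (\<forall>k. Sk k < V))"
  then show "\<exists>t. 0 \<le> t \<and> t \<le> V \<and> ((t \<le> Sm \<and> (\<forall>k<m. Sk k < t)) \<or> ((\<forall>k. Sk k < t) \<and> b))"
  proof
    assume A: "0 \<le> min Sm V \<and> (\<forall>k<m. Sk k < min Sm V)"
    show ?thesis by (rule exI[of _ "min Sm V"]) (use A in auto)
  next
    assume A: "b \<and> 0 \<le> V \<and> (\<forall>k. Sk k < V)"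
    show ?thesis by (rule exI[of _ V]) (use A in auto)
  qed
qed

lemma reach_eq:
  fixes g :: 's
  assumes rg: "\<rho> g > 0"
  shows "reach_bounded \<rho> g r = {\<sigma>. \<exists>m. st \<sigma> m = g \<and>
     ((0 \<le> min (\<Sum>i\<le>m. tm \<sigma> i) ((\<Sum>j<m. tm \<sigma> j) + (r - Acc \<rho> \<sigma> m) / \<rho> g) \<and>
       (\<forall>k<m. (\<Sum>i\<le>k. tm \<sigma> i) < min (\<Sum>i\<le>m. tm \<sigma> i) ((\<Sum>j<m. tm \<sigma> j) + (r - Acc \<rho> \<sigma> m) / \<rho> g))) \<or>
      (m = (LEAST m::nat. False) \<and> 0 \<le> (\<Sum>j<m. tm \<sigma> j) + (r - Acc \<rho> \<sigma> m) / \<rho> g \<and>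
       (\<forall>k. (\<Sum>i\<le>k. tm \<sigma> i) < (\<Sum>j<m. tm \<sigma> j) + (r - Acc \<rho> \<sigma> m) / \<rho> g)))}"
proof -
  have key: "(\<exists>t\<ge>0. state_at \<sigma> t = g \<and> cum_reward \<rho> \<sigma> t \<le> r) \<longleftrightarrow>
     (\<exists>m. st \<sigma> m = g \<and> (\<exists>t. 0 \<le> t \<and> t \<le> (\<Sum>j<m. tm \<sigma> j) + (r - Acc \<rho> \<sigma> m) / \<rho> g \<and>
        ((t \<le> (\<Sum>i\<le>m. tm \<sigma> i) \<and> (\<forall>k<m. (\<Sum>i\<le>k. tm \<sigma> i) < t)) \<or>
         ((\<forall>k. (\<Sum>i\<le>k. tm \<sigma> i) < t) \<and> m = (LEAST m::nat. False)))))" for \<sigma>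
  proof -
    have cr: "cum_reward \<rho> \<sigma> t \<le> r \<longleftrightarrow> t \<le> (\<Sum>j<idx_at \<sigma> t. tm \<sigma> j) + (r - Acc \<rho> \<sigma> (idx_at \<sigma> t)) / \<rho> g"
      if "st \<sigma> (idx_at \<sigma> t) = g" for t
    proof -
      have "cum_reward \<rho> \<sigma> t = Acc \<rho> \<sigma> (idx_at \<sigma> t) + (t - (\<Sum>j<idx_at \<sigma> t. tm \<sigma> j)) * \<rho> g"
        using that by (simp add: cum_reward_def Let_def Acc_def)
      then have "cum_reward \<rho> \<sigma> t \<le> r \<longleftrightarrow> (t - (\<Sum>j<idx_at \<sigma> t. tm \<sigma> j)) * \<rho> g \<le> r - Acc \<rho> \<sigma> (idx_at \<sigma> t)"
        by linarith
      also have "\<dots> \<longleftrightarrow> t - (\<Sum>j<idx_at \<sigma> t. tm \<sigma> j) \<le> (r - Acc \<rho> \<sigma> (idx_at \<sigma> t)) / \<rho> g"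
        by (rule pos_le_divide_eq[OF rg, symmetric])
      finally show ?thesis by linarith
    qed
    show ?thesis
    proof
      assume "\<exists>t\<ge>0. state_at \<sigma> t = g \<and> cum_reward \<rho> \<sigma> t \<le> r"
      then obtain t where t: "t \<ge> 0" "state_at \<sigma> t = g" "cum_reward \<rho> \<sigma> t \<le> r" by blast
      have s: "st \<sigma> (idx_at \<sigma> t) = g" using t by (simp add: state_at_def)
      show "\<exists>m. st \<sigma> m = g \<and> (\<exists>t. 0 \<le> t \<and> t \<le> (\<Sum>j<m. tm \<sigma> j) + (r - Acc \<rho> \<sigma> m) / \<rho> g \<and>
        ((t \<le> (\<Sum>i\<le>m. tm \<sigma> i) \<and> (\<forall>k<m. (\<Sum>i\<le>k. tm \<sigma> i) < t)) \<or>
         ((\<forall>k. (\<Sum>i\<le>k. tm \<sigma> i) < t) \<and> m = (LEAST m::nat. False))))"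
        using s t cr[OF s] idx_iff[of \<sigma> t "idx_at \<sigma> t"] by blast
    next
      assume "\<exists>m. st \<sigma> m = g \<and> (\<exists>t. 0 \<le> t \<and> t \<le> (\<Sum>j<m. tm \<sigma> j) + (r - Acc \<rho> \<sigma> m) / \<rho> g \<and>
        ((t \<le> (\<Sum>i\<le>m. tm \<sigma> i) \<and> (\<forall>k<m. (\<Sum>i\<le>k. tm \<sigma> i) < t)) \<or>
         ((\<forall>k. (\<Sum>i\<le>k. tm \<sigma> i) < t) \<and> m = (LEAST m::nat. False))))"
      then obtain m t where m: "st \<sigma> m = g" "0 \<le> t" "t \<le> (\<Sum>j<m. tm \<sigma> j) + (r - Acc \<rho> \<sigma> m) / \<rho> g"
        "(t \<le> (\<Sum>i\<le>m. tm \<sigma> i) \<and> (\<forall>k<m. (\<Sum>i\<le>k. tm \<sigma> i) < t)) \<or>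
         ((\<forall>k. (\<Sum>i\<le>k. tm \<sigma> i) < t) \<and> m = (LEAST m::nat. False))" by blast
      have i: "idx_at \<sigma> t = m" using m(4) idx_iff[of \<sigma> t m] by blast
      have s: "st \<sigma> (idx_at \<sigma> t) = g" using i m by simp
      show "\<exists>t\<ge>0. state_at \<sigma> t = g \<and> cum_reward \<rho> \<sigma> t \<le> r"
        using m i cr[OF s] by (auto simp: state_at_def)
    qed
  qed
  show ?thesis
    unfolding reach_bounded_def key ex_t_iff by simp
qed

lemma sets_reach:
  fixes g :: 's
  assumes rg: "\<rho> g > 0"
  shows "reach_bounded \<rho> g r \<in> sets PS"
proof -
  have "{\<sigma> \<in> space PS. \<exists>m. st \<sigma> m = g \<and>
     ((0 \<le> min (\<Sum>i\<le>m. tm \<sigma> i) ((\<Sum>j<m. tm \<sigma> j) + (r - Acc \<rho> \<sigma> m) / \<rho> g) \<and>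
       (\<forall>k<m. (\<Sum>i\<le>k. tm \<sigma> i) < min (\<Sum>i\<le>m. tm \<sigma> i) ((\<Sum>j<m. tm \<sigma> j) + (r - Acc \<rho> \<sigma> m) / \<rho> g))) \<or>
      (m = (LEAST m::nat. False) \<and> 0 \<le> (\<Sum>j<m. tm \<sigma> j) + (r - Acc \<rho> \<sigma> m) / \<rho> g \<and>
       (\<forall>k. (\<Sum>i\<le>k. tm \<sigma> i) < (\<Sum>j<m. tm \<sigma> j) + (r - Acc \<rho> \<sigma> m) / \<rho> g)))} \<in> sets PS"
    by measurable
  then show ?thesis by (simp add: reach_eq[where \<rho>=\<rho> and g=g, OF rg] space_PS)
qed


lemma alg:
  fixes p q c :: "'s::finite \<Rightarrow> real"
  assumes p: "0 < p s" "p s < 1" and qs: "q s = 0" and qy: "\<And>y. y \<noteq> s \<Longrightarrow> q y = p y / (1 - p s)"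
  shows "c s = (\<Sum>y\<in>UNIV. p y * c y) \<longleftrightarrow> c s = (\<Sum>y\<in>UNIV. q y * c y)"
proof -
  define R where "R = (\<Sum>y\<in>UNIV - {s}. p y * c y)"
  have P: "(\<Sum>y\<in>UNIV. p y * c y) = p s * c s + R"
    unfolding R_def by (subst sum.remove[of UNIV s]) auto
  have "(\<Sum>y\<in>UNIV. q y * c y) = q s * c s + (\<Sum>y\<in>UNIV - {s}. q y * c y)"
    by (subst sum.remove[of UNIV s]) auto
  also have "(\<Sum>y\<in>UNIV - {s}. q y * c y) = (\<Sum>y\<in>UNIV - {s}. p y * c y / (1 - p s))"
    by (rule sum.cong) (auto simp: qy)
  also have "\<dots> = R / (1 - p s)" unfolding R_def by (simp add: sum_divide_distrib)
  finally have Q: "(\<Sum>y\<in>UNIV. q y * c y) = R / (1 - p s)" using qs by simp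
  have ne: "1 - p s \<noteq> 0" using p by simp
  have "c s = p s * c s + R \<longleftrightarrow> c s * (1 - p s) = R" by (simp add: algebra_simps)
  also have "\<dots> \<longleftrightarrow> c s = R / (1 - p s)" using ne by (simp add: eq_divide_eq)
  finally show ?thesis using P Q by simp
qed

lemma hh_le1:
  fixes P :: "'s::finite \<Rightarrow> 's pmf"
  assumes E: "\<And>x. E x > 0"
  shows "hh P E \<rho> g x r \<le> 1"
  unfolding hh_def by (rule prob_space.emeasure_le_1[OF paths_prob[where E=E and P=P and x=x, OF E]])

lemma Top_s:
  fixes P :: "'s::finite \<Rightarrow> 's pmf"
  assumes E: "\<And>x. E x > 0" and sg: "s \<noteq> g" and rs: "\<rho> s = 0"
  shows "Top P E \<rho> g f s r = (\<Sum>y\<in>UNIV. ennreal (pmf (P s) y) * f y r)"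
  unfolding Top_def using sg rs int_fst[where E=E and x=s and P=P and F="\<lambda>y. f y r", OF E] by simp

lemma ennsum:
  fixes p c :: "'s::finite \<Rightarrow> real"
  assumes "\<And>y. p y \<ge> 0" "\<And>y. c y \<ge> 0"
  shows "(\<Sum>y\<in>UNIV. ennreal (p y) * ennreal (c y)) = ennreal (\<Sum>y\<in>UNIV. p y * c y)"
  using assms by (simp add: ennreal_mult'[symmetric] sum_ennreal)

lemma transfer_fix:
  fixes p q :: "'s::finite \<Rightarrow> real" and h :: "'s \<Rightarrow> ennreal"
  assumes p: "0 < p s" "p s < 1" and qs: "q s = 0" and qy: "\<And>y. y \<noteq> s \<Longrightarrow> q y = p y / (1 - p s)"
    and pn: "\<And>y. p y \<ge> 0" and qn: "\<And>y. q y \<ge> 0"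
    and h1: "\<And>y. h y \<le> 1"
  shows "h s = (\<Sum>y\<in>UNIV. ennreal (p y) * h y) \<longleftrightarrow> h s = (\<Sum>y\<in>UNIV. ennreal (q y) * h y)"
proof -
  define c where "c y = enn2real (h y)" for y
  have hc: "h y = ennreal (c y)" for y
    using h1[of y] unfolding c_def by (metis ennreal_enn2real ennreal_one_less_top order_le_less_trans less_top)
  have c0: "c y \<ge> 0" for y by (simp add: c_def)
  have "h s = (\<Sum>y\<in>UNIV. ennreal (p y) * h y) \<longleftrightarrow> c s = (\<Sum>y\<in>UNIV. p y * c y)"
    unfolding hc ennsum[OF pn c0] using c0 pn by (simp add: sum_nonneg)
  also have "\<dots> \<longleftrightarrow> c s = (\<Sum>y\<in>UNIV. q y * c y)" by (rule alg[where p=p and q=q and s=s and c=c, OF p qs qy])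
  also have "\<dots> \<longleftrightarrow> h s = (\<Sum>y\<in>UNIV. ennreal (q y) * h y)"
    unfolding hc ennsum[OF qn c0] using c0 qn by (simp add: sum_nonneg)
  finally show ?thesis .
qed

lemma reach_hh:
  fixes P :: "'s::finite \<Rightarrow> 's pmf"
  assumes E: "\<And>x. E x > 0" and rho: "\<And>x. \<rho> x \<ge> 0" and rg: "\<rho> g > 0" and sg: "s \<noteq> g"
  shows "reach_prob P E \<rho> s g r = enn2real (hh P E \<rho> g s r)"
proof -
  have "AE \<sigma> in ctmc_paths P E s. \<sigma> \<in> reach_bounded \<rho> g r \<longleftrightarrow> \<sigma> \<in> Hinf \<rho> g r"
    using AE_tm_pos[where P=P and x=s, OF E] AE_st0[where P=P and x=s, OF E]
  proof eventually_elim
    case (elim \<sigma>)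
    then show ?case using reach_char[of \<sigma> g \<rho> r] sg rho rg by auto
  qed
  then have "emeasure (ctmc_paths P E s) (reach_bounded \<rho> g r) = emeasure (ctmc_paths P E s) (Hinf \<rho> g r)"
    by (rule emeasure_eq_AE) (auto simp: sets_paths sets_reach[where \<rho>=\<rho> and g=g, OF rg])
  then show ?thesis by (simp add: reach_prob_def measure_def hh_def)
qed

theorem lemma5:
  fixes P P' :: "'s::finite \<Rightarrow> 's pmf" and E :: "'s \<Rightarrow> real" and \<rho> :: "'s \<Rightarrow> real"
    and g s :: 's and r :: real
  assumes E_pos: "\<And>x. E x > 0"
    and rho_nonneg: "\<And>x. \<rho> x \<ge> 0"
    and g_absorbing: "absorbing P g"
    and g_unique: "\<And>x. absorbing P x \<Longrightarrow> x = g"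
    and rho_g: "\<rho> g > 0"
    and rho_s: "\<rho> s = 0"
    and self_loop: "0 < pmf (P s) s" "pmf (P s) s < 1"
    and P'_other: "\<And>x. x \<noteq> s \<Longrightarrow> P' x = P x"
    and P'_s_s: "pmf (P' s) s = 0"
    and P'_s: "\<And>s'. s' \<noteq> s \<Longrightarrow> pmf (P' s) s' = pmf (P s) s' / (1 - pmf (P s) s)"
    and r_nonneg: "r \<ge> 0"
  shows "reach_prob P E \<rho> s g r = reach_prob P' E \<rho> s g r"
proof -
  have sg: "s \<noteq> g" using rho_s rho_g by auto
  have Top_other: "Top P' E \<rho> g f x r' = Top P E \<rho> g f x r'" if "x \<noteq> s" for f x r'
    using P'_other[OF that] by (simp add: Top_def ctmc_step_def)
  have tf: "h s = (\<Sum>y\<in>UNIV. ennreal (pmf (P s) y) * h y) \<longleftrightarrow> h s = (\<Sum>y\<in>UNIV. ennreal (pmf (P' s) y) * h y)"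
    if "\<And>y. h y \<le> 1" for h :: "'s \<Rightarrow> ennreal"
    by (rule transfer_fix[where p="pmf (P s)" and q="pmf (P' s)" and s=s and h=h, OF self_loop P'_s_s P'_s pmf_nonneg pmf_nonneg that])
  have le1: "hh P' E \<rho> g x r' \<le> hh P E \<rho> g x r'" for x r'
  proof (rule hh_least[OF E_pos])
    fix y r''
    show "Top P' E \<rho> g (hh P E \<rho> g) y r'' \<le> hh P E \<rho> g y r''"
    proof (cases "y = s")
      case False
      then show ?thesis using hh_fix[where P=P and \<rho>=\<rho> and g=g and x=y and r=r'', OF E_pos] Top_other[OF False] by simp
    next
      case True
      have "hh P E \<rho> g s r'' = Top P E \<rho> g (hh P E \<rho> g) s r''" by (rule hh_fix[where E=E, OF E_pos])
      then have "hh P E \<rho> g s r'' = (\<Sum>y\<in>UNIV. ennreal (pmf (P s) y) * hh P E \<rho> g y r'')"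
        by (simp add: Top_s[where E=E and s=s and g=g and \<rho>=\<rho>, OF E_pos sg rho_s])
      then have "hh P E \<rho> g s r'' = (\<Sum>y\<in>UNIV. ennreal (pmf (P' s) y) * hh P E \<rho> g y r'')"
        using tf[of "\<lambda>y. hh P E \<rho> g y r''"] hh_le1[where E=E and P=P and \<rho>=\<rho> and g=g and r=r'', OF E_pos] by blast
      then show ?thesis using True by (simp add: Top_s[where E=E and s=s and g=g and \<rho>=\<rho>, OF E_pos sg rho_s])
    qed
  qed
  have le2: "hh P E \<rho> g x r' \<le> hh P' E \<rho> g x r'" for x r'
  proof (rule hh_least[OF E_pos])
    fix y r''
    show "Top P E \<rho> g (hh P' E \<rho> g) y r'' \<le> hh P' E \<rho> g y r''"
    proof (cases "y = s")
      case False
      then show ?thesis using hh_fix[where P=P' and \<rho>=\<rho> and g=g and x=y and r=r'', OF E_pos] Top_other[OF False] by simp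
    next
      case True
      have "hh P' E \<rho> g s r'' = Top P' E \<rho> g (hh P' E \<rho> g) s r''" by (rule hh_fix[where E=E, OF E_pos])
      then have "hh P' E \<rho> g s r'' = (\<Sum>y\<in>UNIV. ennreal (pmf (P' s) y) * hh P' E \<rho> g y r'')"
        by (simp add: Top_s[where E=E and s=s and g=g and \<rho>=\<rho>, OF E_pos sg rho_s])
      then have "hh P' E \<rho> g s r'' = (\<Sum>y\<in>UNIV. ennreal (pmf (P s) y) * hh P' E \<rho> g y r'')"
        using tf[of "\<lambda>y. hh P' E \<rho> g y r''"] hh_le1[where E=E and P=P' and \<rho>=\<rho> and g=g and r=r'', OF E_pos] by blast
      then show ?thesis using True by (simp add: Top_s[where E=E and s=s and g=g and \<rho>=\<rho>, OF E_pos sg rho_s])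
    qed
  qed
  have "hh P E \<rho> g s r = hh P' E \<rho> g s r" using le1 le2 by (metis order_antisym)
  then show ?thesis
    using reach_hh[where E=E and \<rho>=\<rho> and g=g and s=s and P=P and r=r, OF E_pos rho_nonneg rho_g sg] reach_hh[where E=E and \<rho>=\<rho> and g=g and s=s and P=P' and r=r, OF E_pos rho_nonneg rho_g sg]
    by simp
qed

end
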